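(* Let $N\ge 1$ and let $D_1^N,\ldots,D_N^N:\mathbb{R}_+^N\to\mathbb{R}$ be demand functions satisfying assumptions (A1) and (A2) below. Fix a price vector $p=(p_1,\ldots,p_N)\in\mathbb{R}_+^N$ with $p_1\le p_2\le\cdots\le p_N$. Then $$D_1^N(p_1,\ldots,p_N)\ \ge\ D_2^N(p_1,\ldots,p_N)\ \ge\ \cdots\ \ge\ D_N^N(p_1,\ldots,p_N).$$
   Context: (A1) Each $D_i^N$ is smooth in all variables, $D_N^N(0,\ldots,0)>0$, $\partial D_i^N/\partial p_i<0$, and $\partial D_i^N/\partial p_j>0$ for $j\neq i$. (A2) Exchangeability: for all $i,j\in\{1,\ldots,N\}$ and all $p$, $D_i^N(p_1,\ldots,p_i,\ldots,p_j,\ldots,p_N)=D_j^N(p_1,\ldots,p_j,\ldots,p_i,\ldots,p_N)$ (the right-hand side has the $i$-th and $j$-th prices swapped); consequently $D_i^N$ is invariant under permutations of the prices $p_k$, $k\ne i$. *)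

theory Defs
  imports "HOL-Analysis.Analysis"
begin

text \<open>Prices are vectors in real^'n, where the index type 'n is a finite linear
order (standing for {1..N}, N = CARD('n) \<ge> 1).\<close>

definition nonneg_orthant :: "(real ^ 'n) set" where
  "nonneg_orthant = {p. \<forall>k. 0 \<le> p $ k}"

definition partial :: "'n \<Rightarrow> (real ^ 'n \<Rightarrow> real) \<Rightarrow> real ^ 'n \<Rightarrow> real" where
  "partial j f p = deriv (\<lambda>t. f (p + t *\<^sub>R axis j 1)) 0"

definition has_partial :: "'n \<Rightarrow> (real ^ 'n \<Rightarrow> real) \<Rightarrow> real ^ 'n \<Rightarrow> bool" where
  "has_partial j f p \<longleftrightarrow> (\<lambda>t. f (p + t *\<^sub>R axis j 1)) differentiable (at 0)"

fun iter_partial :: "'n list \<Rightarrow> (real ^ 'n \<Rightarrow> real) \<Rightarrow> real ^ 'n \<Rightarrow> real" where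
  "iter_partial [] f = f"
| "iter_partial (j # js) f = partial j (iter_partial js f)"

definition smooth_on_open :: "(real ^ 'n) set \<Rightarrow> (real ^ 'n \<Rightarrow> real) \<Rightarrow> bool" where
  "smooth_on_open U f \<longleftrightarrow> open U \<and>
     (\<forall>js. continuous_on U (iter_partial js f) \<and>
           (\<forall>j. \<forall>p\<in>U. has_partial j (iter_partial js f) p))"

definition swap_prices :: "'n \<Rightarrow> 'n \<Rightarrow> real ^ 'n \<Rightarrow> real ^ 'n" where
  "swap_prices i j p = (\<chi> k. if k = i then p $ j else if k = j then p $ i else p $ k)"

end

theory Submission
  imports Defs
begin

lemma line_deriv:
  fixes G :: "real ^ 'n \<Rightarrow> real"
  assumes "has_partial k G (x + t *\<^sub>R axis k 1)"
  shows "((\<lambda>s. G (x + s *\<^sub>R axis k 1)) has_real_derivative partial k G (x + t *\<^sub>R axis k 1)) (at t)"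
proof -
  let ?y = "x + t *\<^sub>R axis k 1"
  have "((\<lambda>s. G (?y + s *\<^sub>R axis k 1)) has_real_derivative partial k G ?y) (at 0)"
    using assms unfolding has_partial_def partial_def
    by (simp add: DERIV_deriv_iff_real_differentiable)
  moreover have "(\<lambda>s. G (?y + s *\<^sub>R axis k 1)) = (\<lambda>s. G (x + (s + t) *\<^sub>R axis k 1))"
    by (rule ext) (simp add: algebra_simps scaleR_add_left)
  ultimately have "((\<lambda>s. G (x + (s + t) *\<^sub>R axis k 1)) has_real_derivative partial k G ?y) (at 0)"
    by simp
  then show ?thesis using DERIV_shift[of "\<lambda>s. G (x + s *\<^sub>R axis k 1)" "partial k G ?y" 0 t]
    by simp
qed

lemma line_mono:
  fixes G :: "real ^ 'n \<Rightarrow> real"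
  assumes "a \<le> b"
    and hp: "\<And>t. a \<le> t \<Longrightarrow> t \<le> b \<Longrightarrow> has_partial k G (x + t *\<^sub>R axis k 1)"
    and neg: "\<And>t. a \<le> t \<Longrightarrow> t \<le> b \<Longrightarrow> partial k G (x + t *\<^sub>R axis k 1) < 0"
  shows "G (x + b *\<^sub>R axis k 1) \<le> G (x + a *\<^sub>R axis k 1)"
proof (rule DERIV_nonpos_imp_nonincreasing[OF assms(1)])
  fix t assume t: "a \<le> t" "t \<le> b"
  show "\<exists>y. ((\<lambda>s. G (x + s *\<^sub>R axis k 1)) has_real_derivative y) (at t) \<and> y \<le> 0"
    using line_deriv[OF hp[OF t]] neg[OF t] by (intro exI[of _ "partial k G (x + t *\<^sub>R axis k 1)"]) simp
qed

lemma line_mono_pos: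
  fixes G :: "real ^ 'n \<Rightarrow> real"
  assumes "a \<le> b"
    and hp: "\<And>t. a \<le> t \<Longrightarrow> t \<le> b \<Longrightarrow> has_partial k G (x + t *\<^sub>R axis k 1)"
    and pos: "\<And>t. a \<le> t \<Longrightarrow> t \<le> b \<Longrightarrow> partial k G (x + t *\<^sub>R axis k 1) > 0"
  shows "G (x + a *\<^sub>R axis k 1) \<le> G (x + b *\<^sub>R axis k 1)"
proof (rule DERIV_nonneg_imp_nondecreasing[OF assms(1)])
  fix t assume t: "a \<le> t" "t \<le> b"
  show "\<exists>y. ((\<lambda>s. G (x + s *\<^sub>R axis k 1)) has_real_derivative y) (at t) \<and> y \<ge> 0"
    using line_deriv[OF hp[OF t]] pos[OF t] by (intro exI[of _ "partial k G (x + t *\<^sub>R axis k 1)"]) simp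
qed

theorem proposition2p1:
  fixes D :: "'n::{finite,linorder} \<Rightarrow> real ^ 'n::{finite,linorder} \<Rightarrow> real"
    and p :: "real ^ 'n::{finite,linorder}"
  assumes A1: "\<exists>U G. nonneg_orthant \<subseteq> U \<and> (\<forall>i. smooth_on_open U (G i))
      \<and> (\<forall>i. \<forall>q\<in>nonneg_orthant. G i q = D i q)
      \<and> (\<forall>i. \<forall>q\<in>nonneg_orthant. partial i (G i) q < 0)
      \<and> (\<forall>i j. j \<noteq> i \<longrightarrow> (\<forall>q\<in>nonneg_orthant. partial j (G i) q > 0))"
    and A1_pos: "D (GREATEST i. True) 0 > 0"
    and A2: "\<And>i j q. q \<in> nonneg_orthant \<Longrightarrow> D i q = D j (swap_prices i j q)"
    and p_nonneg: "p \<in> nonneg_orthant"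
    and p_sorted: "\<And>i j. i \<le> j \<Longrightarrow> p $ i \<le> p $ j"
  shows "\<And>i j. i \<le> j \<Longrightarrow> D i p \<ge> D j p"
proof -
  fix i j :: 'n
  assume ij: "i \<le> j"
  show "D i p \<ge> D j p"
  proof (cases "i = j")
    case True then show ?thesis by simp
  next
    case False
    obtain U G where U: "nonneg_orthant \<subseteq> U" and sm: "\<forall>i. smooth_on_open U (G i)"
      and GD: "\<forall>i. \<forall>q\<in>nonneg_orthant. G i q = D i q"
      and own: "\<forall>i. \<forall>q\<in>nonneg_orthant. partial i (G i) q < 0"
      and cross: "\<forall>i j. j \<noteq> i \<longrightarrow> (\<forall>q\<in>nonneg_orthant. partial j (G i) q > 0)"
      using A1 by (elim exE conjE) (rule that; assumption)
    have hp: "\<And>k q. q \<in> nonneg_orthant \<Longrightarrow> has_partial k (G i) q"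
    proof -
      fix k :: "'n::{finite,linorder}" and q :: "real ^ 'n::{finite,linorder}" assume "q \<in> nonneg_orthant"
      then have "q \<in> U" using U by blast
      have "smooth_on_open U (G i)" using sm by blast
      then have "\<forall>j. \<forall>p\<in>U. has_partial j (iter_partial [] (G i)) p"
        unfolding smooth_on_open_def by blast
      then show "has_partial k (G i) q" using \<open>q \<in> U\<close> by simp
    qed
    define d where "d = p $ j - p $ i"
    have d0: "0 \<le> d" using p_sorted[OF ij] by (simp add: d_def)
    define p' where "p' = p + d *\<^sub>R axis i 1"
    define q where "q = swap_prices j i p"
    have q_eq: "q = p' + (- d) *\<^sub>R axis j 1"
      using False unfolding q_def p'_def swap_prices_def d_def
      by (simp add: vec_eq_iff axis_def)
    have pn: "\<And>k. 0 \<le> p $ k" using p_nonneg by (simp add: nonneg_orthant_def)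
    have in1: "\<And>t. 0 \<le> t \<Longrightarrow> p + t *\<^sub>R axis i 1 \<in> nonneg_orthant"
      using pn by (simp add: nonneg_orthant_def axis_def)
    have in2: "\<And>t. - d \<le> t \<Longrightarrow> t \<le> 0 \<Longrightarrow> p' + t *\<^sub>R axis j 1 \<in> nonneg_orthant"
    proof -
      fix t assume t: "- d \<le> t" "t \<le> 0"
      have pj: "0 \<le> p $ j + t" using pn[of i] t by (simp add: d_def)
      show "p' + t *\<^sub>R axis j 1 \<in> nonneg_orthant"
        using pn pj False t by (auto simp add: nonneg_orthant_def axis_def p'_def d_def)
    qed
    have s1: "G i p' \<le> G i p"
    proof -
      have "G i (p + d *\<^sub>R axis i 1) \<le> G i (p + 0 *\<^sub>R axis i 1)"
        by (rule line_mono[OF d0]) (simp_all add: hp in1 own)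
      then show ?thesis unfolding p'_def by simp
    qed
    have s2: "G i q \<le> G i p'"
    proof -
      have "G i (p' + (-d) *\<^sub>R axis j 1) \<le> G i (p' + 0 *\<^sub>R axis j 1)"
        by (rule line_mono_pos) (use d0 False in \<open>simp_all add: hp in2 cross\<close>)
      then show ?thesis unfolding q_eq by simp
    qed
    have qn: "q \<in> nonneg_orthant" using in2[of "-d"] q_eq d0 by simp
    have "D j p = D i q" using A2[OF p_nonneg, of j i] by (simp add: q_def)
    also have "\<dots> = G i q" using GD qn by simp
    also have "\<dots> \<le> G i p" using s1 s2 by simp
    also have "\<dots> = D i p" using GD p_nonneg by simp
    finally show ?thesis .
  qed
qed

end
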